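(* Suppose that, after a permutation of its columns, $A=[A^{(1)},\dots,A^{(k)}]$ where each $A^{(i)}\in\mathbb{R}^{n\times m_i}$ is a submatrix of $A$ and $\mathrm{New}(A^{(1)}),\dots,\mathrm{New}(A^{(k)})$ are mutually disjoint faces of $\mathrm{New}(A)$. Then (with coordinates of $\mathbb{R}^m$ grouped accordingly) $C_{\mathrm{NNS}}(A)=C_{\mathrm{NNS}}(A^{(1)})\times\cdots\times C_{\mathrm{NNS}}(A^{(k)})$ and $C_{\mathrm{SAGE}}(A)=C_{\mathrm{SAGE}}(A^{(1)})\times\cdots\times C_{\mathrm{SAGE}}(A^{(k)})$.
   Context: Let $A\in\mathbb{R}^{n\times m}$ have distinct columns $a_1,\dots,a_m$. For $c\in\mathbb{R}^m$, $\mathrm{Sig}(A,c)$ denotes the function $x\mapsto\sum_{i=1}^m c_i\exp(a_i^\top x)$ on $\mathbb{R}^n$. $\mathrm{New}(A)=\mathrm{conv}\{a_1,\dots,a_m\}$ is the Newton polytope. $C_{\mathrm{NNS}}(A)=\{c\in\mathbb{R}^m:\mathrm{Sig}(A,c)(x)\ge 0\ \forall x\in\mathbb{R}^n\}$. For $k\in[m]$, the $k$-th AGE cone is $C_{\mathrm{AGE}}(A,k)=\{c\in C_{\mathrm{NNS}}(A): c_i\ge 0\ \forall i\ne k\}$, and the SAGE cone is the Minkowski sum $C_{\mathrm{SAGE}}(A)=\sum_{k=1}^m C_{\mathrm{AGE}}(A,k)$. These definitions apply equally to any submatrix of $A$. *)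

theory Defs
  imports "HOL-Analysis.Analysis" "HOL-Library.FuncSet"
begin

text \<open>Exponent matrix A is given by its columns a i (i in a finite index set S);
  coefficient vectors in R^S are extensional functions on S.\<close>

definition Sig :: "('i \<Rightarrow> real^'n) \<Rightarrow> 'i set \<Rightarrow> ('i \<Rightarrow> real) \<Rightarrow> real^'n \<Rightarrow> real" where
  "Sig a S c x = (\<Sum>i\<in>S. c i * exp (a i \<bullet> x))"

definition Newton :: "('i \<Rightarrow> real^'n) \<Rightarrow> 'i set \<Rightarrow> (real^'n) set" where
  "Newton a S = convex hull (a ` S)"

definition C_NNS :: "('i \<Rightarrow> real^'n) \<Rightarrow> 'i set \<Rightarrow> ('i \<Rightarrow> real) set" where
  "C_NNS a S = {c \<in> extensional S. \<forall>x. Sig a S c x \<ge> 0}"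

definition C_AGE :: "('i \<Rightarrow> real^'n) \<Rightarrow> 'i set \<Rightarrow> 'i \<Rightarrow> ('i \<Rightarrow> real) set" where
  "C_AGE a S k = {c \<in> C_NNS a S. \<forall>i\<in>S. i \<noteq> k \<longrightarrow> c i \<ge> 0}"

definition C_SAGE :: "('i \<Rightarrow> real^'n) \<Rightarrow> 'i set \<Rightarrow> ('i \<Rightarrow> real) set" where
  "C_SAGE a S = {c. \<exists>f. (\<forall>k\<in>S. f k \<in> C_AGE a S k) \<and>
                        c = restrict (\<lambda>i. \<Sum>k\<in>S. f k i) S}"

end

theory Submission
  imports Defs "HOL-Real_Asymp.Real_Asymp"
begin

lemma exp_neg_lim: fixes d :: real assumes "d < 0" shows "((\<lambda>t. exp (t*d)) \<longlongrightarrow> 0) at_top"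
  using assms by real_asymp

lemma Sig_restrict: "Sig a B (restrict c B) x = Sig a B c x"
  unfolding Sig_def by (rule sum.cong) auto

lemma nns_restrict:
  assumes fin: "finite I" and sub: "B \<subseteq> I" and c: "c \<in> C_NNS a I"
    and le: "\<forall>i\<in>I. a i \<bullet> w \<le> b" and eq: "\<forall>i\<in>I. (a i \<bullet> w = b \<longleftrightarrow> i \<in> B)"
  shows "restrict c B \<in> C_NNS a B"
proof -
  have "Sig a B c x \<ge> 0" for x
  proof -
    define g where "g t = (\<Sum>i\<in>I. c i * exp (a i \<bullet> x) * exp (t * (a i \<bullet> w - b)))" for t :: real
    have g_eq: "g t = exp (-(t*b)) * Sig a I c (x + t *\<^sub>R w)" for t
      unfolding g_def Sig_def sum_distrib_left
      by (rule sum.cong) (simp_all add: inner_add_right algebra_simps flip: exp_add)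
    have gnn: "g t \<ge> 0" for t
      using c unfolding g_eq C_NNS_def by auto
    have lim: "(g \<longlongrightarrow> (\<Sum>i\<in>I. c i * exp (a i \<bullet> x) * (if i \<in> B then 1 else 0))) at_top"
      unfolding g_def
    proof (intro tendsto_sum tendsto_mult_left)
      fix i assume i: "i \<in> I"
      show "((\<lambda>t. exp (t * (a i \<bullet> w - b))) \<longlongrightarrow> (if i \<in> B then 1 else 0)) at_top"
      proof (cases "i \<in> B")
        case True
        then have "a i \<bullet> w - b = 0" using eq i by auto
        then show ?thesis using True by simp
      next
        case False
        then have "a i \<bullet> w - b < 0" using eq le i by force
        then show ?thesis using False exp_neg_lim by simp
      qed
    qed
    have "0 \<le> (\<Sum>i\<in>I. c i * exp (a i \<bullet> x) * (if i \<in> B then 1 else 0))"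
      by (rule tendsto_lowerbound[OF lim]) (auto simp: gnn)
    also have "\<dots> = (\<Sum>i\<in>I \<inter> B. c i * exp (a i \<bullet> x))"
      using fin by (simp add: sum.inter_restrict if_distrib cong: if_cong)
    also have "\<dots> = Sig a B c x" using sub unfolding Sig_def by (simp add: Int_absorb1)
    finally show ?thesis .
  qed
  then show ?thesis unfolding C_NNS_def by (auto simp: Sig_restrict)
qed

lemma age_add:
  assumes "c1 \<in> C_AGE a B k" "c2 \<in> C_AGE a B k"
  shows "restrict (\<lambda>i. c1 i + c2 i) B \<in> C_AGE a B k"
proof -
  have sig: "Sig a B (restrict (\<lambda>i. c1 i + c2 i) B) x = Sig a B c1 x + Sig a B c2 x" for x
    unfolding Sig_restrict unfolding Sig_def by (simp add: sum.distrib distrib_right)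
  have a1: "\<forall>x. Sig a B c1 x \<ge> 0" "\<forall>i\<in>B. i \<noteq> k \<longrightarrow> c1 i \<ge> 0"
    using assms(1) unfolding C_AGE_def C_NNS_def by auto
  have a2: "\<forall>x. Sig a B c2 x \<ge> 0" "\<forall>i\<in>B. i \<noteq> k \<longrightarrow> c2 i \<ge> 0"
    using assms(2) unfolding C_AGE_def C_NNS_def by auto
  have "\<forall>x. Sig a B (restrict (\<lambda>i. c1 i + c2 i) B) x \<ge> 0"
    using a1(1) a2(1) unfolding sig by (simp add: add_nonneg_nonneg)
  moreover have "\<forall>i\<in>B. i \<noteq> k \<longrightarrow> restrict (\<lambda>i. c1 i + c2 i) B i \<ge> 0"
    using a1(2) a2(2) by (simp add: add_nonneg_nonneg)
  ultimately show ?thesis unfolding C_AGE_def C_NNS_def by simp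
qed

lemma zero_age: "restrict (\<lambda>_. 0) B \<in> C_AGE a B k"
  unfolding C_AGE_def C_NNS_def by (auto simp: Sig_restrict Sig_def)

lemma sage_add:
  assumes "c1 \<in> C_SAGE a B" "c2 \<in> C_SAGE a B"
  shows "restrict (\<lambda>i. c1 i + c2 i) B \<in> C_SAGE a B"
proof -
  obtain f1 where f1: "\<forall>k\<in>B. f1 k \<in> C_AGE a B k" "c1 = restrict (\<lambda>i. \<Sum>k\<in>B. f1 k i) B"
    using assms(1) unfolding C_SAGE_def by blast
  obtain f2 where f2: "\<forall>k\<in>B. f2 k \<in> C_AGE a B k" "c2 = restrict (\<lambda>i. \<Sum>k\<in>B. f2 k i) B"
    using assms(2) unfolding C_SAGE_def by blast
  define f where "f k = restrict (\<lambda>i. f1 k i + f2 k i) B" for k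
  have fa: "\<forall>k\<in>B. f k \<in> C_AGE a B k" using f1(1) f2(1) by (simp add: f_def age_add)
  have fe: "restrict (\<lambda>i. c1 i + c2 i) B = restrict (\<lambda>i. \<Sum>k\<in>B. f k i) B"
    unfolding f1(2) f2(2) f_def by (auto simp: sum.distrib)
  show ?thesis unfolding C_SAGE_def mem_Collect_eq
    by (rule exI[of _ f]) (use fa fe in blast)
qed

lemma sage_zero: "restrict (\<lambda>_. 0) B \<in> C_SAGE a B"
  unfolding C_SAGE_def
  by (rule CollectI, rule exI[of _ "\<lambda>k. restrict (\<lambda>_. 0) B"]) (simp add: zero_age, intro restrict_ext, simp)

lemma sage_sum:
  assumes "finite K" "\<forall>k\<in>K. h k \<in> C_SAGE a B"
  shows "restrict (\<lambda>i. \<Sum>k\<in>K. h k i) B \<in> C_SAGE a B"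
  using assms
proof (induction K rule: finite_induct)
  case empty
  have "restrict (\<lambda>i. \<Sum>k\<in>{}. h k i) B = restrict (\<lambda>_. 0) B" by simp
  then show ?case using sage_zero by metis
next
  case (insert k K)
  have mem: "restrict (\<lambda>i. h k i + restrict (\<lambda>i. \<Sum>k\<in>K. h k i) B i) B \<in> C_SAGE a B"
    using insert by (intro sage_add) auto
  have eq: "restrict (\<lambda>i. h k i + restrict (\<lambda>i. \<Sum>k\<in>K. h k i) B i) B
     = restrict (\<lambda>i. \<Sum>k\<in>insert k K. h k i) B"
    using insert by auto
  show ?case using mem unfolding eq .
qed

lemma age_sage:
  assumes "finite B" "k \<in> B" "c \<in> C_AGE a B k"
  shows "c \<in> C_SAGE a B"
proof -
  define f where "f k' = (if k' = k then c else restrict (\<lambda>_. 0) B)" for k'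
  have "\<forall>k'\<in>B. f k' \<in> C_AGE a B k'"
  proof
    fix k' assume "k' \<in> B"
    show "f k' \<in> C_AGE a B k'"
    proof (cases "k' = k")
      case True then have "f k' = c" by (simp add: f_def)
      then show ?thesis using assms(3) True by simp
    next
      case False then show ?thesis using zero_age by (simp add: f_def)
    qed
  qed
  moreover have "c = restrict (\<lambda>i. \<Sum>k'\<in>B. f k' i) B"
  proof
    fix i
    have ext: "c \<in> extensional B" using assms(3) unfolding C_AGE_def C_NNS_def by auto
    show "c i = restrict (\<lambda>i. \<Sum>k'\<in>B. f k' i) B i"
    proof (cases "i \<in> B")
      case True
      have "(\<Sum>k'\<in>B. f k' i) = (\<Sum>k'\<in>B. if k' = k then c i else 0)"
      proof (rule sum.cong)
        fix k' assume "k' \<in> B"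
        show "f k' i = (if k' = k then c i else 0)"
          unfolding f_def using True by (cases "k' = k") simp_all
      qed simp
      also have "\<dots> = c i" using assms(1,2) by (simp add: sum.delta)
      finally show ?thesis using True by simp
    next
      case False then show ?thesis by (simp add: extensional_arb[OF ext False])
    qed
  qed
  ultimately show ?thesis unfolding C_SAGE_def by blast
qed

lemma age_extend:
  assumes "finite I" "B \<subseteq> I" "d \<in> C_AGE a B k"
  shows "restrict (\<lambda>i. if i \<in> B then d i else 0) I \<in> C_AGE a I k"
proof -
  have sig: "Sig a I (restrict (\<lambda>i. if i \<in> B then d i else 0) I) x = Sig a B d x" for x
  proof -
    have "Sig a I (restrict (\<lambda>i. if i \<in> B then d i else 0) I) x
        = (\<Sum>i\<in>I. if i \<in> B then d i * exp (a i \<bullet> x) else 0)"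
      unfolding Sig_restrict Sig_def by (rule sum.cong) auto
    also have "\<dots> = (\<Sum>i\<in>I \<inter> B. d i * exp (a i \<bullet> x))"
      using assms(1) by (simp add: sum.inter_restrict)
    also have "\<dots> = Sig a B d x" using assms(2) by (simp add: Sig_def Int_absorb1)
    finally show ?thesis .
  qed
  have d1: "\<forall>x. Sig a B d x \<ge> 0" and d2: "\<forall>i\<in>B. i \<noteq> k \<longrightarrow> d i \<ge> 0"
    using assms(3) unfolding C_AGE_def C_NNS_def by auto
  have "restrict (\<lambda>i. if i \<in> B then d i else 0) I \<in> C_NNS a I"
    unfolding C_NNS_def using d1 by (simp only: sig mem_Collect_eq restrict_extensional simp_thms)
  moreover have "\<forall>i\<in>I. i \<noteq> k \<longrightarrow> restrict (\<lambda>i. if i \<in> B then d i else 0) I i \<ge> 0"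
    using d2 by simp
  ultimately show ?thesis unfolding C_AGE_def by blast
qed

lemma sage_empty: "restrict g {} \<in> C_SAGE a {}"
  unfolding C_SAGE_def by auto

theorem mainTheorem9:
  fixes a :: "'i \<Rightarrow> real^'n" and I :: "'i set"
    and J :: "'k set" and B :: "'k \<Rightarrow> 'i set"
  assumes "finite I" and "inj_on a I"
    and "finite J"
    and "(\<Union>j\<in>J. B j) = I"
    and "\<And>j j'. j \<in> J \<Longrightarrow> j' \<in> J \<Longrightarrow> j \<noteq> j' \<Longrightarrow> B j \<inter> B j' = {}"
    and "\<And>j. j \<in> J \<Longrightarrow> Newton a (B j) face_of Newton a I"
    and "\<And>j j'. j \<in> J \<Longrightarrow> j' \<in> J \<Longrightarrow> j \<noteq> j' \<Longrightarrow>
           Newton a (B j) \<inter> Newton a (B j') = {}"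
  shows "C_NNS a I = {c \<in> extensional I. \<forall>j\<in>J. restrict c (B j) \<in> C_NNS a (B j)}
       \<and> C_SAGE a I = {c \<in> extensional I. \<forall>j\<in>J. restrict c (B j) \<in> C_SAGE a (B j)}"
proof -
  note finI = assms(1) and finJ = assms(3) and UB = assms(4) and disj = assms(5)
    and face = assms(6) and ndisj = assms(7)
  have Bsub: "B j \<subseteq> I" if "j \<in> J" for j using UB that by blast
  have finB: "finite (B j)" if "j \<in> J" for j using Bsub[OF that] finI finite_subset by blast
  have poly: "polyhedron (Newton a I)"
    unfolding Newton_def
    by (rule polytope_imp_polyhedron) (use finI in \<open>auto simp: polytope_def\<close>)
  have expo: "\<exists>w b. (\<forall>i\<in>I. a i \<bullet> w \<le> b) \<and> (\<forall>i\<in>I. (a i \<bullet> w = b \<longleftrightarrow> i \<in> B j))"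
    if j: "j \<in> J" for j
  proof -
    have "Newton a (B j) exposed_face_of Newton a I"
      using exposed_face_of_polyhedron[OF poly] face[OF j] by blast
    then obtain u b where ub: "Newton a I \<subseteq> {x. u \<bullet> x \<le> b}"
      "Newton a (B j) = Newton a I \<inter> {x. u \<bullet> x = b}"
      unfolding exposed_face_of_def by blast
    have inP: "a i \<in> Newton a I" if "i \<in> I" for i
      unfolding Newton_def using that by (intro hull_inc) auto
    have inB: "a i \<in> Newton a (B j)" if "i \<in> B j" for i
      unfolding Newton_def using that by (intro hull_inc) auto
    have "\<forall>i\<in>I. a i \<bullet> u \<le> b"
    proof
      fix i assume "i \<in> I"
      then have "a i \<in> {x. u \<bullet> x \<le> b}" using ub(1) inP by blast
      then show "a i \<bullet> u \<le> b" by (simp add: inner_commute)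
    qed
    moreover have "\<forall>i\<in>I. (a i \<bullet> u = b \<longleftrightarrow> i \<in> B j)"
    proof (intro ballI iffI)
      fix i assume i: "i \<in> I" and e: "a i \<bullet> u = b"
      then have aF: "a i \<in> Newton a (B j)" using ub(2) inP[OF i] by (auto simp: inner_commute)
      obtain j' where j': "j' \<in> J" "i \<in> B j'" using i UB by blast
      show "i \<in> B j"
      proof (rule ccontr)
        assume "i \<notin> B j"
        then have "j \<noteq> j'" using j' by auto
        then show False using ndisj[OF j j'(1)] aF inB[of i] j' unfolding Newton_def
          by (metis (no_types, lifting) disjoint_iff hull_inc image_eqI)
      qed
    next
      fix i assume i: "i \<in> I" and "i \<in> B j"
      then show "a i \<bullet> u = b" using ub(2) inB by (auto simp: inner_commute)
    qed
    ultimately show ?thesis by blast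
  qed
  have nns_sub: "restrict c (B j) \<in> C_NNS a (B j)" if cj: "c \<in> C_NNS a I" "j \<in> J" for c j
  proof -
    obtain w b where "\<forall>i\<in>I. a i \<bullet> w \<le> b" "\<forall>i\<in>I. (a i \<bullet> w = b \<longleftrightarrow> i \<in> B j)"
      using expo[OF cj(2)] by blast
    then show ?thesis using nns_restrict[OF finI Bsub[OF cj(2)] cj(1)] by blast
  qed
  have sig_dec: "Sig a I c x = (\<Sum>j\<in>J. Sig a (B j) c x)" for c x
    unfolding Sig_def UB[symmetric]
    by (rule sum.UNION_disjoint) (use finJ finB disj in blast)+
  have NNS: "C_NNS a I = {c \<in> extensional I. \<forall>j\<in>J. restrict c (B j) \<in> C_NNS a (B j)}"
  proof
    show "C_NNS a I \<subseteq> {c \<in> extensional I. \<forall>j\<in>J. restrict c (B j) \<in> C_NNS a (B j)}"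
    proof
      fix c assume c: "c \<in> C_NNS a I"
      then have "c \<in> extensional I" unfolding C_NNS_def by blast
      then show "c \<in> {c \<in> extensional I. \<forall>j\<in>J. restrict c (B j) \<in> C_NNS a (B j)}"
        using nns_sub[OF c] by blast
    qed
  next
    show "{c \<in> extensional I. \<forall>j\<in>J. restrict c (B j) \<in> C_NNS a (B j)} \<subseteq> C_NNS a I"
    proof
      fix c assume c: "c \<in> {c \<in> extensional I. \<forall>j\<in>J. restrict c (B j) \<in> C_NNS a (B j)}"
      have "Sig a I c x \<ge> 0" for x
      proof -
        have "\<forall>j\<in>J. Sig a (B j) (restrict c (B j)) x \<ge> 0"
          using c unfolding C_NNS_def by blast
        then have "\<forall>j\<in>J. Sig a (B j) c x \<ge> 0" by (simp only: Sig_restrict)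
        then show ?thesis unfolding sig_dec by (simp add: sum_nonneg)
      qed
      moreover have "c \<in> extensional I" using c by blast
      ultimately show "c \<in> C_NNS a I" unfolding C_NNS_def by blast
    qed
  qed
  have SAGE: "C_SAGE a I = {c \<in> extensional I. \<forall>j\<in>J. restrict c (B j) \<in> C_SAGE a (B j)}"
  proof
    show "C_SAGE a I \<subseteq> {c \<in> extensional I. \<forall>j\<in>J. restrict c (B j) \<in> C_SAGE a (B j)}"
    proof
      fix c assume "c \<in> C_SAGE a I"
      then obtain f where f: "\<forall>k\<in>I. f k \<in> C_AGE a I k" and ce: "c = restrict (\<lambda>i. \<Sum>k\<in>I. f k i) I"
        unfolding C_SAGE_def by blast
      have "restrict c (B j) \<in> C_SAGE a (B j)" if j: "j \<in> J" for j
      proof -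
        have eq: "restrict c (B j) = restrict (\<lambda>i. \<Sum>k\<in>I. restrict (f k) (B j) i) (B j)"
          unfolding ce using Bsub[OF j] by (intro restrict_ext) auto
        have "\<forall>k\<in>I. restrict (f k) (B j) \<in> C_SAGE a (B j)"
        proof
          fix k assume k: "k \<in> I"
          have fk: "f k \<in> C_NNS a I" "\<forall>i\<in>I. i \<noteq> k \<longrightarrow> f k i \<ge> 0"
            using f k unfolding C_AGE_def by auto
          have nn: "restrict (f k) (B j) \<in> C_NNS a (B j)" using nns_sub[OF fk(1) j] .
          show "restrict (f k) (B j) \<in> C_SAGE a (B j)"
          proof (cases "k \<in> B j")
            case True
            have "restrict (f k) (B j) \<in> C_AGE a (B j) k"
              using nn fk(2) Bsub[OF j] unfolding C_AGE_def by auto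
            then show ?thesis using age_sage[OF finB[OF j] True] by blast
          next
            case False
            show ?thesis
            proof (cases "B j = {}")
              case True then show ?thesis using sage_empty by simp
            next
              case False
              then obtain k0 where k0: "k0 \<in> B j" by blast
              have "restrict (f k) (B j) \<in> C_AGE a (B j) k0"
                using nn fk(2) Bsub[OF j] \<open>k \<notin> B j\<close> unfolding C_AGE_def by auto
              then show ?thesis using age_sage[OF finB[OF j] k0] by blast
            qed
          qed
        qed
        then show ?thesis unfolding eq by (rule sage_sum[OF finI])
      qed
      moreover have "c \<in> extensional I" unfolding ce by simp
      ultimately show "c \<in> {c \<in> extensional I. \<forall>j\<in>J. restrict c (B j) \<in> C_SAGE a (B j)}"
        by blast
    qed
  next
    show "{c \<in> extensional I. \<forall>j\<in>J. restrict c (B j) \<in> C_SAGE a (B j)} \<subseteq> C_SAGE a I"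
    proof
      fix c assume c: "c \<in> {c \<in> extensional I. \<forall>j\<in>J. restrict c (B j) \<in> C_SAGE a (B j)}"
      then have cext: "c \<in> extensional I" by blast
      have "\<forall>j\<in>J. \<exists>f. (\<forall>k\<in>B j. f k \<in> C_AGE a (B j) k) \<and>
              restrict c (B j) = restrict (\<lambda>i. \<Sum>k\<in>B j. f k i) (B j)"
        using c unfolding C_SAGE_def by blast
      then have "\<exists>F. \<forall>j\<in>J. (\<forall>k\<in>B j. F j k \<in> C_AGE a (B j) k) \<and>
              restrict c (B j) = restrict (\<lambda>i. \<Sum>k\<in>B j. F j k i) (B j)"
        by (rule bchoice)
      then obtain F where F0: "\<forall>j\<in>J. (\<forall>k\<in>B j. F j k \<in> C_AGE a (B j) k) \<and>
              restrict c (B j) = restrict (\<lambda>i. \<Sum>k\<in>B j. F j k i) (B j)"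
        by blast
      have F: "(\<forall>k\<in>B j. F j k \<in> C_AGE a (B j) k) \<and>
              restrict c (B j) = restrict (\<lambda>i. \<Sum>k\<in>B j. F j k i) (B j)" if "j \<in> J" for j
        using F0 that by blast
      define E where "E j = restrict (\<lambda>i. if i \<in> B j then c i else 0) I" for j
      have Ej: "E j \<in> C_SAGE a I" if j: "j \<in> J" for j
      proof -
        define G where "G k = restrict (\<lambda>i. if i \<in> B j then F j k i else 0) I" for k
        have "\<forall>k\<in>B j. G k \<in> C_SAGE a I"
        proof
          fix k assume k: "k \<in> B j"
          have "G k \<in> C_AGE a I k" unfolding G_def
            using age_extend[OF finI Bsub[OF j]] F[OF j] k by blast
          then show "G k \<in> C_SAGE a I" using age_sage[OF finI] k Bsub[OF j] by blast
        qed
        then have "restrict (\<lambda>i. \<Sum>k\<in>B j. G k i) I \<in> C_SAGE a I"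
          by (rule sage_sum[OF finB[OF j]])
        moreover have "restrict (\<lambda>i. \<Sum>k\<in>B j. G k i) I = E j"
        proof (rule ext)
          fix i
          show "restrict (\<lambda>i. \<Sum>k\<in>B j. G k i) I i = E j i"
          proof (cases "i \<in> I \<and> i \<in> B j")
            case True
            have "c i = restrict c (B j) i" using True by simp
            also have "\<dots> = (\<Sum>k\<in>B j. F j k i)" using F[OF j] True by (metis restrict_apply')
            finally show ?thesis using True by (simp add: G_def E_def)
          next
            case False then show ?thesis by (auto simp: G_def E_def)
          qed
        qed
        ultimately show ?thesis by simp
      qed
      have mem: "restrict (\<lambda>i. \<Sum>j\<in>J. E j i) I \<in> C_SAGE a I"
        by (rule sage_sum[OF finJ]) (use Ej in blast)
      have eqc: "restrict (\<lambda>i. \<Sum>j\<in>J. E j i) I = c"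
      proof (rule ext)
        fix i
        show "restrict (\<lambda>i. \<Sum>j\<in>J. E j i) I i = c i"
        proof (cases "i \<in> I")
          case True
          then obtain j0 where j0: "j0 \<in> J" "i \<in> B j0" using UB by blast
          have "(\<Sum>j\<in>J. E j i) = (\<Sum>j\<in>J. if j = j0 then c i else 0)"
          proof (rule sum.cong)
            fix j assume j: "j \<in> J"
            have "i \<in> B j \<longleftrightarrow> j = j0" using disj[OF j j0(1)] j0 by blast
            then show "E j i = (if j = j0 then c i else 0)" using True by (simp add: E_def)
          qed simp
          also have "\<dots> = c i" using finJ j0(1) by (simp add: sum.delta)
          finally show ?thesis using True by simp
        next
          case False then show ?thesis by (simp add: extensional_arb[OF cext False])
        qed
      qed
      show "c \<in> C_SAGE a I" using mem unfolding eqc .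
    qed
  qed
  show ?thesis using NNS SAGE by blast
qed
end
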